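(* If $1\le m\le 4$, then for every Latin square $K$ on $[m]$ the matroid $M[K]$ is realizable over $\mathbb{R}$.
   Context: A Latin square $K=(k_{i,j})$ on $[m]$ is an $m\times m$ matrix with entries in $[m]$ in which each symbol occurs exactly once in each row and each column. Let $\mathcal{C}[K]=\{\{i,m+j,2m+k_{i,j}\}:1\le i,j\le m\}$, a family of $3$-subsets of $[3m]$. $M[K]$ is the simple matroid on $[3m]$ whose family of all $3$-element circuits is exactly $\mathcal{C}[K]$ and which has rank $3$ when $m\ge 2$ (for $m=1$ it is the rank-$2$ uniform matroid on $\{1,2,3\}$). A matroid is realizable over $\mathbb{R}$ if it is the underlying matroid of an arrangement of hyperplanes over $\mathbb{R}$ (equivalently, the linear matroid of a finite family of vectors in a real vector space). *)

theory Defs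
  imports Complex_Main
begin

definition latin_square :: "nat \<Rightarrow> (nat \<Rightarrow> nat \<Rightarrow> nat) \<Rightarrow> bool" where
  "latin_square m K \<longleftrightarrow>
     (\<forall>i\<in>{1..m}. bij_betw (\<lambda>j. K i j) {1..m} {1..m}) \<and>
     (\<forall>j\<in>{1..m}. bij_betw (\<lambda>i. K i j) {1..m} {1..m})"

definition CK :: "nat \<Rightarrow> (nat \<Rightarrow> nat \<Rightarrow> nat) \<Rightarrow> nat set set" where
  "CK m K = {{i, m + j, 2 * m + K i j} | i j. i \<in> {1..m} \<and> j \<in> {1..m}}"

definition matroid :: "'a set \<Rightarrow> ('a set \<Rightarrow> bool) \<Rightarrow> bool" where
  "matroid E indep \<longleftrightarrow>
     finite E \<and>
     (\<forall>I. indep I \<longrightarrow> I \<subseteq> E) \<and>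
     indep {} \<and>
     (\<forall>I J. indep J \<and> I \<subseteq> J \<longrightarrow> indep I) \<and>
     (\<forall>I J. indep I \<and> indep J \<and> card I < card J \<longrightarrow>
        (\<exists>x\<in>J - I. indep (insert x I)))"

definition circuit :: "'a set \<Rightarrow> ('a set \<Rightarrow> bool) \<Rightarrow> 'a set \<Rightarrow> bool" where
  "circuit E indep C \<longleftrightarrow> C \<subseteq> E \<and> \<not> indep C \<and> (\<forall>x\<in>C. indep (C - {x}))"

definition matroid_rank :: "'a set \<Rightarrow> ('a set \<Rightarrow> bool) \<Rightarrow> nat" where
  "matroid_rank E indep = Max {card I | I. I \<subseteq> E \<and> indep I}"

definition simple_matroid :: "'a set \<Rightarrow> ('a set \<Rightarrow> bool) \<Rightarrow> bool" where
  "simple_matroid E indep \<longleftrightarrow> matroid E indep \<and>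
     (\<forall>S. S \<subseteq> E \<and> card S \<le> 2 \<longrightarrow> indep S)"

definition is_MK :: "nat \<Rightarrow> (nat \<Rightarrow> nat \<Rightarrow> nat) \<Rightarrow> nat set \<Rightarrow> (nat set \<Rightarrow> bool) \<Rightarrow> bool" where
  "is_MK m K E indep \<longleftrightarrow>
     E = {1..3 * m} \<and>
     (if m = 1 then (\<forall>S. indep S \<longleftrightarrow> S \<subseteq> {1,2,3} \<and> card S \<le> 2)
      else simple_matroid E indep \<and>
           {C. circuit E indep C \<and> card C = 3} = CK m K \<and>
           matroid_rank E indep = 3)"

definition lin_indep_family :: "nat \<Rightarrow> (nat \<Rightarrow> nat \<Rightarrow> real) \<Rightarrow> nat set \<Rightarrow> bool" where
  "lin_indep_family d v S \<longleftrightarrow>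
     (\<forall>c. (\<forall>k<d. (\<Sum>i\<in>S. c i * v i k) = 0) \<longrightarrow> (\<forall>i\<in>S. c i = 0))"

definition real_realizable :: "nat set \<Rightarrow> (nat set \<Rightarrow> bool) \<Rightarrow> bool" where
  "real_realizable E indep \<longleftrightarrow>
     (\<exists>d v. \<forall>S. indep S \<longleftrightarrow> S \<subseteq> E \<and> lin_indep_family d v S)"

end

theory Submission
  imports Defs "HOL-Analysis.Analysis"
begin

definition vec3 :: "(nat \<Rightarrow> nat \<Rightarrow> real) \<Rightarrow> nat \<Rightarrow> real \<times> real \<times> real" where
  "vec3 v i = (v i 0, v i 1, v i 2)"

lemma sum_vec3: "(\<Sum>i\<in>S. c i *\<^sub>R vec3 v i) =
   ((\<Sum>i\<in>S. c i * v i 0), (\<Sum>i\<in>S. c i * v i 1), (\<Sum>i\<in>S. c i * v i 2))"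
  by (simp add: vec3_def prod_eq_iff fst_sum snd_sum)

lemma less3: "(\<forall>k<(3::nat). P k) \<longleftrightarrow> P 0 \<and> P 1 \<and> P 2"
  by (auto simp: less_Suc_eq numeral_3_eq_3 numeral_2_eq_2)

lemma lif_sum: "lin_indep_family 3 v S \<longleftrightarrow> (\<forall>c. (\<Sum>i\<in>S. c i *\<^sub>R vec3 v i) = 0 \<longrightarrow> (\<forall>i\<in>S. c i = 0))"
  unfolding lin_indep_family_def less3 sum_vec3 by (simp add: zero_prod_def)

lemma lif_indep:
  assumes "finite S"
  shows "lin_indep_family 3 v S \<longleftrightarrow> inj_on (vec3 v) S \<and> independent (vec3 v ` S)"
proof
  let ?W = "vec3 v"
  assume L: "lin_indep_family 3 v S"
  hence L': "\<And>c. (\<Sum>i\<in>S. c i *\<^sub>R ?W i) = 0 \<Longrightarrow> (\<forall>i\<in>S. c i = 0)" by (simp add: lif_sum)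
  have inj: "inj_on ?W S"
  proof (rule inj_onI, rule ccontr)
    fix i j assume ij: "i \<in> S" "j \<in> S" "?W i = ?W j" "i \<noteq> j"
    define c where "c = (\<lambda>k. if k = i then (1::real) else if k = j then -1 else 0)"
    have "\<And>k. c k *\<^sub>R ?W k = (if k = i then ?W k else 0) + (if k = j then - ?W k else 0)"
      using ij by (auto simp: c_def)
    hence "(\<Sum>k\<in>S. c k *\<^sub>R ?W k) = (\<Sum>k\<in>S. (if k = i then ?W k else 0)) + (\<Sum>k\<in>S. (if k = j then - ?W k else 0))"
      by (simp add: sum.distrib)
    also have "\<dots> = 0" using ij assms by (simp add: sum.delta)
    finally have "\<forall>k\<in>S. c k = 0" by (rule L')
    thus False using ij by (auto simp: c_def)
  qed
  moreover have "independent (?W ` S)"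
  proof
    assume "dependent (?W ` S)"
    then obtain u where u: "\<exists>w\<in>?W ` S. u w \<noteq> 0" "(\<Sum>w\<in>?W ` S. u w *\<^sub>R w) = 0"
      using assms by (auto simp: dependent_finite)
    have "(\<Sum>i\<in>S. u (?W i) *\<^sub>R ?W i) = (\<Sum>w\<in>?W ` S. u w *\<^sub>R w)"
      using inj by (simp add: sum.reindex)
    with u(2) have "\<forall>i\<in>S. u (?W i) = 0" by (intro L') simp
    with u(1) show False by auto
  qed
  ultimately show "inj_on ?W S \<and> independent (?W ` S)" by blast
next
  let ?W = "vec3 v"
  assume R: "inj_on ?W S \<and> independent (?W ` S)"
  show "lin_indep_family 3 v S"
    unfolding lif_sum
  proof (intro allI impI)
    fix c assume c: "(\<Sum>i\<in>S. c i *\<^sub>R ?W i) = 0"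
    define u where "u w = c (the_inv_into S ?W w)" for w
    have "(\<Sum>w\<in>?W ` S. u w *\<^sub>R w) = (\<Sum>i\<in>S. u (?W i) *\<^sub>R ?W i)"
      using R by (simp add: sum.reindex)
    also have "\<dots> = (\<Sum>i\<in>S. c i *\<^sub>R ?W i)"
      using R by (intro sum.cong) (auto simp: u_def the_inv_into_f_f)
    finally have "(\<Sum>w\<in>?W ` S. u w *\<^sub>R w) = 0" using c by simp
    hence "\<forall>w\<in>?W ` S. u w = 0" using R assms by (auto simp: dependent_finite)
    thus "\<forall>i\<in>S. c i = 0" using R by (auto simp: u_def the_inv_into_f_f)
  qed
qed

lemma lin_matroid:
  assumes E: "finite E"
  shows "matroid E (\<lambda>S. S \<subseteq> E \<and> lin_indep_family 3 v S)"
proof -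
  let ?W = "vec3 v"
  have I: "S \<subseteq> E \<and> lin_indep_family 3 v S \<longleftrightarrow> S \<subseteq> E \<and> inj_on ?W S \<and> independent (?W ` S)" for S
    using lif_indep[of S v] finite_subset[OF _ E] by blast
  have e: "\<exists>x\<in>J - I. insert x I \<subseteq> E \<and> inj_on ?W (insert x I) \<and> independent (?W ` insert x I)"
    if A: "(I \<subseteq> E \<and> inj_on ?W I \<and> independent (?W ` I)) \<and>
       (J \<subseteq> E \<and> inj_on ?W J \<and> independent (?W ` J)) \<and> card I < card J" for I J
    proof (rule ccontr)
      assume N: "\<not> ?thesis"
      have "?W ` J \<subseteq> span (?W ` I)"
      proof
        fix w assume "w \<in> ?W ` J"
        then obtain x where x: "x \<in> J" "w = ?W x" by auto
        show "w \<in> span (?W ` I)"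
        proof (cases "x \<in> I \<or> ?W x \<in> ?W ` I")
          case True thus ?thesis using x by (auto intro: span_base)
        next
          case False
          hence "inj_on ?W (insert x I)" using A by auto
          moreover have "insert x I \<subseteq> E" using A x by auto
          ultimately have "\<not> independent (?W ` insert x I)" using N x False by auto
          thus ?thesis using A False x by (auto simp: independent_insert)
        qed
      qed
      moreover have "finite (?W ` I)" using A E finite_subset by blast
      ultimately have "card (?W ` J) \<le> card (?W ` I)"
        using A independent_span_bound by blast
      thus False using A by (simp add: card_image)
    qed
  have s: "I \<subseteq> E \<and> inj_on ?W I \<and> independent (?W ` I)"
    if "(J \<subseteq> E \<and> inj_on ?W J \<and> independent (?W ` J)) \<and> I \<subseteq> J" for I J
    using that by (meson image_mono independent_mono inj_on_subset order_trans)
  show ?thesis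
    unfolding matroid_def I
    apply (intro conjI allI impI)
    using E apply blast
          apply blast
         apply simp
        apply simp
       apply (simp add: independent_empty)
      using s apply blast
     using s apply blast
    using s apply blast
    apply (erule e)
    done
qed

lemma lif_card:
  assumes "finite S" "lin_indep_family 3 v S" shows "card S \<le> 3"
proof -
  have "inj_on (vec3 v) S" "independent (vec3 v ` S)" using lif_indep assms by blast+
  hence "card (vec3 v ` S) \<le> DIM(real \<times> real \<times> real)" using independent_bound by blast
  thus ?thesis using \<open>inj_on (vec3 v) S\<close> by (simp add: card_image)
qed

definition crossnz :: "(nat \<Rightarrow> nat \<Rightarrow> real) \<Rightarrow> nat \<Rightarrow> nat \<Rightarrow> bool" where
  "crossnz v a b \<longleftrightarrow> \<not> (v a 1 * v b 2 - v a 2 * v b 1 = 0 \<and>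
      v a 2 * v b 0 - v a 0 * v b 2 = 0 \<and> v a 0 * v b 1 - v a 1 * v b 0 = 0)"

definition det3 :: "(nat \<Rightarrow> nat \<Rightarrow> real) \<Rightarrow> nat \<Rightarrow> nat \<Rightarrow> nat \<Rightarrow> real" where
  "det3 v a b c = v a 0 * (v b 1 * v c 2 - v b 2 * v c 1)
     - v a 1 * (v b 0 * v c 2 - v b 2 * v c 0)
     + v a 2 * (v b 0 * v c 1 - v b 1 * v c 0)"

definition good_sym :: "nat \<Rightarrow> (nat \<Rightarrow> nat \<Rightarrow> nat) \<Rightarrow> (nat \<Rightarrow> nat \<Rightarrow> real) \<Rightarrow> bool" where
  "good_sym m L v \<longleftrightarrow>
    (\<forall>a\<in>{1..3*m}. \<forall>b\<in>{1..3*m}. a \<noteq> b \<longrightarrow> crossnz v a b) \<and>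
    (\<forall>a\<in>{1..3*m}. \<forall>b\<in>{1..3*m}. \<forall>c\<in>{1..3*m}. a \<noteq> b \<and> a \<noteq> c \<and> b \<noteq> c \<longrightarrow>
        (det3 v a b c = 0 \<longleftrightarrow> {a, b, c} \<in> CK m L))"

lemma single_indep:
  assumes "\<not> (v a 0 = 0 \<and> v a 1 = 0 \<and> v a 2 = 0)"
  shows "lin_indep_family 3 v {a}"
  using assms unfolding lin_indep_family_def less3 by auto

lemma pair_indep:
  assumes "a \<noteq> b" "crossnz v a b"
  shows "lin_indep_family 3 v {a, b}"
  unfolding lin_indep_family_def less3
proof (intro allI impI)
  fix c assume "(\<Sum>i\<in>{a, b}. c i * v i 0) = 0 \<and> (\<Sum>i\<in>{a, b}. c i * v i 1) = 0 \<and> (\<Sum>i\<in>{a, b}. c i * v i 2) = 0"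
  hence e: "c a * v a 0 + c b * v b 0 = 0" "c a * v a 1 + c b * v b 1 = 0" "c a * v a 2 + c b * v b 2 = 0"
    using assms by auto
  have "c a * (v a 1 * v b 2 - v a 2 * v b 1) = 0" "c a * (v a 2 * v b 0 - v a 0 * v b 2) = 0"
       "c a * (v a 0 * v b 1 - v a 1 * v b 0) = 0"
       "c b * (v a 1 * v b 2 - v a 2 * v b 1) = 0" "c b * (v a 2 * v b 0 - v a 0 * v b 2) = 0"
       "c b * (v a 0 * v b 1 - v a 1 * v b 0) = 0"
    using e by algebra+
  thus "\<forall>i\<in>{a, b}. c i = 0" using assms(2) unfolding crossnz_def by auto
qed

lemma triple_indep:
  assumes "a \<noteq> b" "a \<noteq> c" "b \<noteq> c" "det3 v a b c \<noteq> 0"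
  shows "lin_indep_family 3 v {a, b, c}"
  unfolding lin_indep_family_def less3
proof (intro allI impI)
  fix u assume "(\<Sum>i\<in>{a, b, c}. u i * v i 0) = 0 \<and> (\<Sum>i\<in>{a, b, c}. u i * v i 1) = 0 \<and> (\<Sum>i\<in>{a, b, c}. u i * v i 2) = 0"
  hence e: "u a * v a 0 + u b * v b 0 + u c * v c 0 = 0" "u a * v a 1 + u b * v b 1 + u c * v c 1 = 0"
     "u a * v a 2 + u b * v b 2 + u c * v c 2 = 0"
    using assms by (auto simp: add.assoc)
  have "u a * det3 v a b c = 0" "u b * det3 v a b c = 0" "u c * det3 v a b c = 0"
    using e unfolding det3_def by algebra+
  thus "\<forall>i\<in>{a, b, c}. u i = 0" using assms(4) by auto
qed

lemma dep_aux:
  assumes "a \<noteq> b" "a \<noteq> c" "b \<noteq> c" "lin_indep_family 3 v {a, b, c}"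
    and "\<And>i. i < 3 \<Longrightarrow> x * v a i + y * v b i + z * v c i = 0"
  shows "x = 0"
proof -
  define u where "u w = (if w = a then x else if w = b then y else z)" for w
  have "\<forall>i<3. (\<Sum>w\<in>{a, b, c}. u w * v w i) = 0"
    using assms by (simp add: u_def add.assoc)
  hence "\<forall>w\<in>{a,b,c}. u w = 0" using assms(4) unfolding lin_indep_family_def by blast
  thus "x = 0" by (simp add: u_def)
qed

lemma triple_dep:
  assumes "a \<noteq> b" "a \<noteq> c" "b \<noteq> c" "det3 v a b c = 0" "crossnz v b c"
  shows "\<not> lin_indep_family 3 v {a, b, c}"
proof
  assume L: "lin_indep_family 3 v {a, b, c}"
  have "v b 1 * v c 2 - v b 2 * v c 1 = 0"
  proof (rule dep_aux[OF assms(1-3) L])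
    fix i :: nat assume "i < 3"
    hence "i = 0 \<or> i = 1 \<or> i = 2" by auto
    moreover have "(v b 1 * v c 2 - v b 2 * v c 1) * v a 0 + (v c 1 * v a 2 - v c 2 * v a 1) * v b 0 + (v a 1 * v b 2 - v a 2 * v b 1) * v c 0 = det3 v a b c"
      unfolding det3_def by algebra
    moreover have "(v b 1 * v c 2 - v b 2 * v c 1) * v a 1 + (v c 1 * v a 2 - v c 2 * v a 1) * v b 1 + (v a 1 * v b 2 - v a 2 * v b 1) * v c 1 = 0"
      by algebra
    moreover have "(v b 1 * v c 2 - v b 2 * v c 1) * v a 2 + (v c 1 * v a 2 - v c 2 * v a 1) * v b 2 + (v a 1 * v b 2 - v a 2 * v b 1) * v c 2 = 0"
      by algebra
    ultimately show "(v b 1 * v c 2 - v b 2 * v c 1) * v a i + (v c 1 * v a 2 - v c 2 * v a 1) * v b i + (v a 1 * v b 2 - v a 2 * v b 1) * v c i = 0"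
      using assms(4) by auto
  qed
  moreover have "v b 2 * v c 0 - v b 0 * v c 2 = 0"
  proof (rule dep_aux[OF assms(1-3) L])
    fix i :: nat assume "i < 3"
    hence "i = 0 \<or> i = 1 \<or> i = 2" by auto
    moreover have "(v b 2 * v c 0 - v b 0 * v c 2) * v a 0 + (v c 2 * v a 0 - v c 0 * v a 2) * v b 0 + (v a 2 * v b 0 - v a 0 * v b 2) * v c 0 = 0"
      by algebra
    moreover have "(v b 2 * v c 0 - v b 0 * v c 2) * v a 1 + (v c 2 * v a 0 - v c 0 * v a 2) * v b 1 + (v a 2 * v b 0 - v a 0 * v b 2) * v c 1 = det3 v a b c"
      unfolding det3_def by algebra
    moreover have "(v b 2 * v c 0 - v b 0 * v c 2) * v a 2 + (v c 2 * v a 0 - v c 0 * v a 2) * v b 2 + (v a 2 * v b 0 - v a 0 * v b 2) * v c 2 = 0"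
      by algebra
    ultimately show "(v b 2 * v c 0 - v b 0 * v c 2) * v a i + (v c 2 * v a 0 - v c 0 * v a 2) * v b i + (v a 2 * v b 0 - v a 0 * v b 2) * v c i = 0"
      using assms(4) by auto
  qed
  moreover have "v b 0 * v c 1 - v b 1 * v c 0 = 0"
  proof (rule dep_aux[OF assms(1-3) L])
    fix i :: nat assume "i < 3"
    hence "i = 0 \<or> i = 1 \<or> i = 2" by auto
    moreover have "(v b 0 * v c 1 - v b 1 * v c 0) * v a 0 + (v c 0 * v a 1 - v c 1 * v a 0) * v b 0 + (v a 0 * v b 1 - v a 1 * v b 0) * v c 0 = 0"
      by algebra
    moreover have "(v b 0 * v c 1 - v b 1 * v c 0) * v a 1 + (v c 0 * v a 1 - v c 1 * v a 0) * v b 1 + (v a 0 * v b 1 - v a 1 * v b 0) * v c 1 = 0"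
      by algebra
    moreover have "(v b 0 * v c 1 - v b 1 * v c 0) * v a 2 + (v c 0 * v a 1 - v c 1 * v a 0) * v b 2 + (v a 0 * v b 1 - v a 1 * v b 0) * v c 2 = det3 v a b c"
      unfolding det3_def by algebra
    ultimately show "(v b 0 * v c 1 - v b 1 * v c 0) * v a i + (v c 0 * v a 1 - v c 1 * v a 0) * v b i + (v a 0 * v b 1 - v a 1 * v b 0) * v c i = 0"
      using assms(4) by auto
  qed
  ultimately show False using assms(5) unfolding crossnz_def by (auto simp: algebra_simps)
qed

lemma crossnz_nz: "crossnz v a b \<Longrightarrow> \<not> (v a 0 = 0 \<and> v a 1 = 0 \<and> v a 2 = 0)"
  unfolding crossnz_def by auto

lemma card_le2_cases:
  assumes "finite S" "card S \<le> 2"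
  shows "S = {} \<or> (\<exists>a. S = {a}) \<or> (\<exists>a b. a \<noteq> b \<and> S = {a, b})"
proof -
  have "card S = 0 \<or> card S = 1 \<or> card S = 2" using assms(2) by auto
  thus ?thesis using assms(1) by (auto simp: card_1_singleton_iff card_2_iff)
qed

lemma main_good:
  assumes m2: "2 \<le> m" and G: "good_sym m L v"
    and R: "\<forall>i\<in>{1..m}. \<forall>j\<in>{1..m}. L i j \<in> {1..m}"
  shows "is_MK m L {1..3*m} (\<lambda>S. S \<subseteq> {1..3*m} \<and> lin_indep_family 3 v S)"
proof -
  define E where "E = {1..3*m}"
  define ind where "ind S \<longleftrightarrow> S \<subseteq> E \<and> lin_indep_family 3 v S" for S
  have G1: "\<And>a b. a \<in> E \<Longrightarrow> b \<in> E \<Longrightarrow> a \<noteq> b \<Longrightarrow> crossnz v a b"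
    using G unfolding good_sym_def E_def by blast
  have G2: "\<And>a b c. a \<in> E \<Longrightarrow> b \<in> E \<Longrightarrow> c \<in> E \<Longrightarrow> a \<noteq> b \<Longrightarrow> a \<noteq> c \<Longrightarrow> b \<noteq> c \<Longrightarrow>
     (det3 v a b c = 0 \<longleftrightarrow> {a, b, c} \<in> CK m L)"
    using G unfolding good_sym_def E_def by blast
  have finE: "finite E" by (simp add: E_def)
  have mat: "matroid E ind" unfolding ind_def by (rule lin_matroid[OF finE])
  have sing: "ind {a}" if "a \<in> E" for a
  proof -
    have "\<exists>b. b \<in> E \<and> b \<noteq> a"
    proof (cases "a = 1")
      case True thus ?thesis using m2 by (intro exI[of _ 2]) (auto simp: E_def)
    next
      case False thus ?thesis using m2 by (intro exI[of _ 1]) (auto simp: E_def)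
    qed
    then obtain b where b: "b \<in> E" "b \<noteq> a" by blast
    show ?thesis using crossnz_nz[OF G1[OF that b(1) b(2)[symmetric]]] that
      unfolding ind_def by (auto intro: single_indep)
  qed
  have pair: "ind {a, b}" if "a \<in> E" "b \<in> E" "a \<noteq> b" for a b
    using pair_indep[OF that(3) G1[OF that]] that unfolding ind_def by auto
  have small: "ind S" if "S \<subseteq> E" "card S \<le> 2" for S
  proof -
    have "finite S" using that finE finite_subset by blast
    from card_le2_cases[OF this that(2)] show ?thesis
    proof (elim disjE exE conjE)
      assume "S = {}" thus ?thesis using mat unfolding matroid_def by blast
    next
      fix a assume "S = {a}" thus ?thesis using sing that by auto
    next
      fix a b assume "a \<noteq> b" "S = {a, b}" thus ?thesis using pair that by auto
    qed
  qed
  have simple: "simple_matroid E ind"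
    unfolding simple_matroid_def using mat small by blast
  have ckE: "C \<subseteq> E \<and> card C = 3 \<and> (\<exists>a b c. C = {a,b,c} \<and> a \<noteq> b \<and> a \<noteq> c \<and> b \<noteq> c)" if CC: "C \<in> CK m L" for C
  proof -
    obtain i j where ij: "i \<in> {1..m}" "j \<in> {1..m}" "C = {i, m + j, 2 * m + L i j}"
      using CC unfolding CK_def by blast
    have "L i j \<in> {1..m}" using R ij by blast
    hence d: "i \<noteq> m + j" "i \<noteq> 2 * m + L i j" "m + j \<noteq> 2 * m + L i j" using ij by auto
    have "C \<subseteq> E" using ij \<open>L i j \<in> {1..m}\<close> by (auto simp: E_def)
    moreover have "card C = 3" using d ij(3) by simp
    ultimately show ?thesis using d ij(3) by blast
  qed
  have circ: "{C. circuit E ind C \<and> card C = 3} = CK m L"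
  proof (intro set_eqI iffI)
    fix C assume "C \<in> {C. circuit E ind C \<and> card C = 3}"
    hence C: "C \<subseteq> E" "\<not> ind C" "card C = 3" unfolding circuit_def by auto
    then obtain a b c where abc: "C = {a, b, c}" "a \<noteq> b" "a \<noteq> c" "b \<noteq> c"
      by (auto simp: card_3_iff)
    have inE: "a \<in> E" "b \<in> E" "c \<in> E" using C(1) abc(1) by auto
    have "det3 v a b c = 0"
    proof (rule ccontr)
      assume "det3 v a b c \<noteq> 0"
      hence "lin_indep_family 3 v {a,b,c}" by (rule triple_indep[OF abc(2-4)])
      thus False using C abc unfolding ind_def by simp
    qed
    hence "{a,b,c} \<in> CK m L" using G2[OF inE abc(2-4)] by blast
    thus "C \<in> CK m L" using abc(1) by (simp only:)
  next
    fix C assume CK: "C \<in> CK m L"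
    have CE: "C \<subseteq> E" "card C = 3" and ex: "\<exists>a b c. C = {a,b,c} \<and> a \<noteq> b \<and> a \<noteq> c \<and> b \<noteq> c"
      using ckE[OF CK] by blast+
    from ex obtain a b c where abc: "C = {a, b, c}" "a \<noteq> b" "a \<noteq> c" "b \<noteq> c" by blast
    have inE: "a \<in> E" "b \<in> E" "c \<in> E" using CE(1) abc(1) by auto
    have "{a,b,c} \<in> CK m L" using CK abc(1) by (simp only:)
    hence "det3 v a b c = 0" using G2[OF inE abc(2-4)] by blast
    hence "\<not> lin_indep_family 3 v {a,b,c}" by (rule triple_dep[OF abc(2-4) _ G1[OF inE(2,3) abc(4)]])
    hence "\<not> ind C" using abc(1) unfolding ind_def by simp
    moreover have "\<forall>x\<in>C. ind (C - {x})"
    proof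
      fix x assume "x \<in> C"
      have "card (C - {x}) = 2" using CE \<open>x \<in> C\<close> by simp
      moreover have "C - {x} \<subseteq> E" using CE by blast
      ultimately show "ind (C - {x})" using small by simp
    qed
    ultimately show "C \<in> {C. circuit E ind C \<and> card C = 3}"
      using CE unfolding circuit_def by auto
  qed
  have rank: "matroid_rank E ind = 3"
    unfolding matroid_rank_def
  proof (rule Max_eqI)
    have "{card I |I. I \<subseteq> E \<and> ind I} \<subseteq> card ` Pow E" by auto
    thus "finite {card I |I. I \<subseteq> E \<and> ind I}" using finE by (meson finite_Pow_iff finite_imageI finite_subset)
  next
    fix y assume "y \<in> {card I |I. I \<subseteq> E \<and> ind I}"
    then obtain I where "y = card I" "I \<subseteq> E" "ind I" by auto
    thus "y \<le> 3" using lif_card finE finite_subset unfolding ind_def by blast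
  next
    have in3: "1 \<in> E" "2 \<in> E" "m + 1 \<in> E" using m2 by (auto simp: E_def)
    have d: "det3 v 1 2 (m+1) \<noteq> 0"
    proof
      assume "det3 v 1 2 (m+1) = 0"
      hence "{1, 2, m+1} \<in> CK m L" using G2[OF in3] m2 by simp
      then obtain i j where ij: "i \<in> {1..m}" "j \<in> {1..m}" "{1::nat, 2, m+1} = {i, m + j, 2 * m + L i j}"
        unfolding CK_def by blast
      have "L i j \<in> {1..m}" using R ij by blast
      have "(2::nat) \<in> {i, m + j, 2 * m + L i j}" "(1::nat) \<in> {i, m + j, 2 * m + L i j}"
        unfolding ij(3)[symmetric] by simp_all
      thus False using ij m2 \<open>L i j \<in> {1..m}\<close> by auto
    qed
    have "lin_indep_family 3 v {1, 2, m+1}"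
      by (rule triple_indep[OF _ _ _ d]) (use m2 in simp_all)
    hence "ind {1, 2, m+1}" unfolding ind_def using in3 by simp
    moreover have "card {1::nat, 2, m+1} = 3" using m2 by simp
    moreover have "{1::nat, 2, m+1} \<subseteq> E" using in3 by simp
    ultimately have "3 = card {1::nat, 2, m+1} \<and> {1::nat, 2, m+1} \<subseteq> E \<and> ind {1, 2, m+1}" by simp
    thus "3 \<in> {card I |I. I \<subseteq> E \<and> ind I}" by (intro CollectI exI[of _ "{1::nat, 2, m+1}"])
  qed
  have eq: "(\<lambda>S. S \<subseteq> E \<and> lin_indep_family 3 v S) = ind"
    unfolding ind_def[abs_def] by (rule refl)
  have m1: "m \<noteq> 1" using m2 by simp
  show ?thesis
    unfolding is_MK_def E_def[symmetric] unfolding eq using m1 simple circ rank by simp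
qed

definition piso :: "nat \<Rightarrow> (nat \<Rightarrow> nat) \<Rightarrow> (nat \<Rightarrow> nat) \<Rightarrow> nat \<Rightarrow> nat" where
  "piso m \<alpha> \<beta> a = (if a \<le> m then \<alpha> a else if a \<le> 2 * m then m + \<beta> (a - m) else a)"

lemma CK_I: "i \<in> {1..m} \<Longrightarrow> j \<in> {1..m} \<Longrightarrow> {i, m + j, 2 * m + L i j} \<in> CK m L"
  unfolding CK_def by blast

lemma CK_E: assumes "C \<in> CK m L"
  obtains i j where "i \<in> {1..m}" "j \<in> {1..m}" "C = {i, m + j, 2 * m + L i j}"
  using assms unfolding CK_def by blast

lemma transfer:
  assumes G: "good_sym m L v"
    and A: "bij_betw \<alpha> {1..m} {1..m}" and B: "bij_betw \<beta> {1..m} {1..m}"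
    and KL: "\<forall>i\<in>{1..m}. \<forall>j\<in>{1..m}. K i j = L (\<alpha> i) (\<beta> j)"
    and R: "\<forall>x\<in>{1..m}. \<forall>y\<in>{1..m}. L x y \<in> {1..m}"
  shows "good_sym m K (\<lambda>a. v (piso m \<alpha> \<beta> a))"
proof -
  define E where "E = {1..3*m}"
  let ?p = "piso m \<alpha> \<beta>"
  have Ai: "inj_on \<alpha> {1..m}" and Ar: "\<And>i. i \<in> {1..m} \<Longrightarrow> \<alpha> i \<in> {1..m}"
    using A unfolding bij_betw_def by auto
  have Bi: "inj_on \<beta> {1..m}" and Br: "\<And>i. i \<in> {1..m} \<Longrightarrow> \<beta> i \<in> {1..m}"
    using B unfolding bij_betw_def by auto
  have p1: "\<And>i. i \<in> {1..m} \<Longrightarrow> ?p i = \<alpha> i" by (simp add: piso_def)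
  have p2: "\<And>j. j \<in> {1..m} \<Longrightarrow> ?p (m + j) = m + \<beta> j" by (simp add: piso_def)
  have p3: "\<And>k. k \<in> {1..m} \<Longrightarrow> ?p (2 * m + k) = 2 * m + k" by (simp add: piso_def)
  have pE: "?p a \<in> E" if aE: "a \<in> E" for a
  proof -
    consider "a \<in> {1..m}" | "a - m \<in> {1..m}" "a = m + (a - m)" | "a > 2 * m" using aE by (force simp: E_def)
    thus ?thesis
    proof cases
      case 1 thus ?thesis using p1 Ar by (force simp: E_def)
    next
      case 2 thus ?thesis using p2[of "a - m"] Br[of "a - m"] by (force simp: E_def)
    next
      case 3 thus ?thesis using aE by (simp add: piso_def E_def)
    qed
  qed
  have pinj: "inj_on ?p E"
  proof (rule inj_onI)
    fix a b assume ab: "a \<in> E" "b \<in> E" "?p a = ?p b"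
    have blk: "(a \<le> m \<longleftrightarrow> ?p a \<le> m) \<and> (a \<le> 2 * m \<longleftrightarrow> ?p a \<le> 2 * m)" if aE: "a \<in> E" for a
    proof -
      consider "a \<in> {1..m}" | "a - m \<in> {1..m}" "a = m + (a - m)" | "a > 2 * m" using aE by (force simp: E_def)
      thus ?thesis
      proof cases
        case 1
        hence "?p a = \<alpha> a" "\<alpha> a \<in> {1..m}" using p1 Ar by auto
        thus ?thesis using 1 by simp
      next
        case 2
        hence "?p a = m + \<beta> (a - m)" "\<beta> (a - m) \<in> {1..m}" using p2[of "a - m"] Br[of "a - m"] by auto
        thus ?thesis using 2 by simp
      next
        case 3 thus ?thesis by (simp add: piso_def)
      qed
    qed
    from blk[OF ab(1)] blk[OF ab(2)] ab(3)
    have same: "(a \<le> m \<longleftrightarrow> b \<le> m) \<and> (a \<le> 2 * m \<longleftrightarrow> b \<le> 2 * m)" by simp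
    show "a = b"
    proof (cases "a \<le> m")
      case True
      hence "b \<le> m" using same by simp
      hence "\<alpha> a = \<alpha> b" using True ab(3) by (simp add: piso_def)
      moreover have "a \<in> {1..m}" "b \<in> {1..m}" using True \<open>b \<le> m\<close> ab(1,2) by (auto simp: E_def)
      ultimately show ?thesis using Ai by (simp add: inj_on_eq_iff)
    next
      case F1: False
      hence F2: "\<not> b \<le> m" using same by simp
      show ?thesis
      proof (cases "a \<le> 2 * m")
        case True
        hence "b \<le> 2 * m" using same by simp
        hence "\<beta> (a - m) = \<beta> (b - m)" using True ab(3) F1 F2 by (simp add: piso_def)
        moreover have "a - m \<in> {1..m}" "b - m \<in> {1..m}" using True \<open>b \<le> 2 * m\<close> F1 F2 by auto
        ultimately have "a - m = b - m" using Bi unfolding inj_on_def by blast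
        thus ?thesis using F1 F2 by simp
      next
        case False
        hence "\<not> b \<le> 2 * m" using same by simp
        thus ?thesis using False ab(3) F1 F2 by (simp add: piso_def)
      qed
    qed
  qed
  have CKt: "C \<in> CK m K \<longleftrightarrow> ?p ` C \<in> CK m L" if CE: "C \<subseteq> E" for C
  proof
    assume "C \<in> CK m K"
    then obtain i j where ij: "i \<in> {1..m}" "j \<in> {1..m}" "C = {i, m + j, 2 * m + K i j}"
      by (rule CK_E)
    have ab: "\<alpha> i \<in> {1..m}" "\<beta> j \<in> {1..m}" using Ar Br ij by blast+
    have k: "K i j = L (\<alpha> i) (\<beta> j)" using KL ij by blast
    have "L (\<alpha> i) (\<beta> j) \<in> {1..m}" using R ab by blast
    hence k2: "K i j \<in> {1..m}" using k by simp
    have "?p ` C = {\<alpha> i, m + \<beta> j, 2 * m + K i j}"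
      using ij(3) p1[OF ij(1)] p2[OF ij(2)] p3[OF k2] by simp
    thus "?p ` C \<in> CK m L" using CK_I[OF ab, of L] k by simp
  next
    assume "?p ` C \<in> CK m L"
    then obtain x y where xy: "x \<in> {1..m}" "y \<in> {1..m}" "?p ` C = {x, m + y, 2 * m + L x y}"
      by (rule CK_E)
    have "x \<in> \<alpha> ` {1..m}" using A xy(1) by (simp add: bij_betw_def)
    then obtain i where i: "i \<in> {1..m}" "\<alpha> i = x" by (elim imageE) simp
    have "y \<in> \<beta> ` {1..m}" using B xy(2) by (simp add: bij_betw_def)
    then obtain j where j: "j \<in> {1..m}" "\<beta> j = y" by (elim imageE) simp
    have k1: "K i j = L x y" using KL i j by blast
    have "L x y \<in> {1..m}" using R xy by blast
    hence k: "K i j = L x y" "K i j \<in> {1..m}" using k1 by simp_all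
    define C' where "C' = {i, m + j, 2 * m + K i j}"
    have C'E: "C' \<subseteq> E" using i j k by (auto simp: C'_def E_def)
    have "?p ` C' = {x, m + y, 2 * m + L x y}"
      unfolding C'_def using p1[OF i(1)] p2[OF j(1)] p3[OF k(2)] i(2) j(2) k(1) by simp
    hence "?p ` C' = ?p ` C" using xy by simp
    hence "C' = C" using inj_on_image_eq_iff[OF pinj C'E CE] by simp
    moreover have "C' \<in> CK m K" unfolding C'_def using CK_I[OF i(1) j(1)] .
    ultimately show "C \<in> CK m K" by simp
  qed
  have G1: "\<And>a b. a \<in> E \<Longrightarrow> b \<in> E \<Longrightarrow> a \<noteq> b \<Longrightarrow> crossnz v a b"
    using G unfolding good_sym_def E_def by blast
  have G2: "\<And>a b c. a \<in> E \<Longrightarrow> b \<in> E \<Longrightarrow> c \<in> E \<Longrightarrow> a \<noteq> b \<Longrightarrow> a \<noteq> c \<Longrightarrow> b \<noteq> c \<Longrightarrow>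
     (det3 v a b c = 0 \<longleftrightarrow> {a, b, c} \<in> CK m L)"
    using G unfolding good_sym_def E_def by blast
  have ne: "?p a \<noteq> ?p b" if "a \<in> E" "b \<in> E" "a \<noteq> b" for a b
    using pinj that unfolding inj_on_def by blast
  have H1: "crossnz (\<lambda>a. v (?p a)) a b" if "a \<in> E" "b \<in> E" "a \<noteq> b" for a b
    using G1[OF pE[OF that(1)] pE[OF that(2)] ne[OF that]] unfolding crossnz_def by simp
  have H2: "det3 (\<lambda>a. v (?p a)) a b c = 0 \<longleftrightarrow> {a, b, c} \<in> CK m K"
    if T: "a \<in> E" "b \<in> E" "c \<in> E" "a \<noteq> b" "a \<noteq> c" "b \<noteq> c" for a b c
  proof -
    have e1: "det3 (\<lambda>a. v (?p a)) a b c = det3 v (?p a) (?p b) (?p c)" unfolding det3_def by simp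
    have e2: "det3 v (?p a) (?p b) (?p c) = 0 \<longleftrightarrow> {?p a, ?p b, ?p c} \<in> CK m L"
      using G2[OF pE[OF T(1)] pE[OF T(2)] pE[OF T(3)] ne[OF T(1,2,4)] ne[OF T(1,3,5)] ne[OF T(2,3,6)]] .
    have e3: "{?p a, ?p b, ?p c} = ?p ` {a, b, c}" by simp
    have e4: "{a, b, c} \<in> CK m K \<longleftrightarrow> ?p ` {a, b, c} \<in> CK m L"
      by (rule CKt) (use T in simp)
    show ?thesis unfolding e1 e2 e3 e4 ..
  qed
  show ?thesis unfolding good_sym_def E_def[symmetric] using H1 H2 by simp
qed

definition vI :: "int list list \<Rightarrow> nat \<Rightarrow> nat \<Rightarrow> int" where
  "vI V a k = V ! (a - 1) ! k"
definition crossnzI :: "int list list \<Rightarrow> nat \<Rightarrow> nat \<Rightarrow> bool" where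
  "crossnzI V a b \<longleftrightarrow> \<not> (vI V a 1 * vI V b 2 - vI V a 2 * vI V b 1 = 0 \<and>
      vI V a 2 * vI V b 0 - vI V a 0 * vI V b 2 = 0 \<and> vI V a 0 * vI V b 1 - vI V a 1 * vI V b 0 = 0)"
definition det3I :: "int list list \<Rightarrow> nat \<Rightarrow> nat \<Rightarrow> nat \<Rightarrow> int" where
  "det3I V a b c = vI V a 0 * (vI V b 1 * vI V c 2 - vI V b 2 * vI V c 1)
     - vI V a 1 * (vI V b 0 * vI V c 2 - vI V b 2 * vI V c 0)
     + vI V a 2 * (vI V b 0 * vI V c 1 - vI V b 1 * vI V c 0)"
definition predI :: "nat list list \<Rightarrow> nat \<Rightarrow> nat \<Rightarrow> nat \<Rightarrow> nat \<Rightarrow> bool" where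
  "predI T m a b c \<longleftrightarrow> a \<le> m \<and> m < b \<and> b \<le> 2 * m \<and> c = 2 * m + T ! (a - 1) ! (b - m - 1)"
definition chk :: "int list list \<Rightarrow> nat list list \<Rightarrow> nat \<Rightarrow> bool" where
  "chk V T m \<longleftrightarrow>
    (\<forall>x\<in>set [1..<m+1]. \<forall>y\<in>set [1..<m+1]. 1 \<le> T ! (x - 1) ! (y - 1) \<and> T ! (x - 1) ! (y - 1) \<le> m) \<and>
    (\<forall>a\<in>set [1..<3*m+1]. \<forall>b\<in>set [a+1..<3*m+1]. crossnzI V a b) \<and>
    (\<forall>a\<in>set [1..<3*m+1]. \<forall>b\<in>set [a+1..<3*m+1]. \<forall>c\<in>set [b+1..<3*m+1].
       (det3I V a b c = 0 \<longleftrightarrow> predI T m a b c))"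

definition tblf :: "nat list list \<Rightarrow> nat \<Rightarrow> nat \<Rightarrow> nat" where
  "tblf T x y = T ! (x - 1) ! (y - 1)"
definition realv :: "int list list \<Rightarrow> nat \<Rightarrow> nat \<Rightarrow> real" where
  "realv V a k = real_of_int (vI V a k)"

lemma sorted_eq:
  fixes a b c x y z :: nat
  assumes "a < b" "b < c" "x < y" "y < z" "{a, b, c} = {x, y, z}"
  shows "a = x \<and> b = y \<and> c = z"
proof -
  have m1: "a \<in> {x, y, z}" "b \<in> {x, y, z}" "c \<in> {x, y, z}"
    unfolding assms(5)[symmetric] by simp_all
  have m2: "x \<in> {a, b, c}" "y \<in> {a, b, c}" "z \<in> {a, b, c}"
    unfolding assms(5) by simp_all
  note m = m1 m2
  have ax: "a = x"
  proof -
    have "x \<le> a" using m(1) assms(1-4) by auto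
    moreover have "a \<le> x" using m(4) assms(1-4) by auto
    ultimately show ?thesis by simp
  qed
  have cz: "c = z"
  proof -
    have "c \<le> z" using m(3) assms(1-4) by auto
    moreover have "z \<le> c" using m(6) assms(1-4) by auto
    ultimately show ?thesis by simp
  qed
  have "b = y" using m(2) ax cz assms(1-4) by auto
  thus ?thesis using ax cz by simp
qed

lemma ck_sorted:
  assumes "a < b" "b < c" "1 \<le> a" and R: "\<forall>x\<in>{1..m}. \<forall>y\<in>{1..m}. L x y \<in> {1..m}"
  shows "{a, b, c} \<in> CK m L \<longleftrightarrow> (a \<le> m \<and> m < b \<and> b \<le> 2 * m \<and> c = 2 * m + L a (b - m))"
proof
  assume "{a, b, c} \<in> CK m L"
  then obtain i j where ij: "i \<in> {1..m}" "j \<in> {1..m}" "{a, b, c} = {i, m + j, 2 * m + L i j}"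
    by (rule CK_E)
  have "L i j \<in> {1..m}" using R ij by blast
  hence "i < m + j" "m + j < 2 * m + L i j" using ij by auto
  from sorted_eq[OF assms(1,2) this ij(3)]
  have "a = i" "b = m + j" "c = 2 * m + L i j" by auto
  thus "a \<le> m \<and> m < b \<and> b \<le> 2 * m \<and> c = 2 * m + L a (b - m)" using ij by auto
next
  assume A: "a \<le> m \<and> m < b \<and> b \<le> 2 * m \<and> c = 2 * m + L a (b - m)"
  have "{a, m + (b - m), 2 * m + L a (b - m)} \<in> CK m L"
    by (rule CK_I) (use A assms(3) in auto)
  moreover have "m + (b - m) = b" using A by simp
  ultimately show "{a, b, c} \<in> CK m L" using A by simp
qed

lemma sym3:
  fixes a b c :: nat
  assumes s1: "\<And>x y z. P x y z \<Longrightarrow> P y x z" and s2: "\<And>x y z. P x y z \<Longrightarrow> P x z y"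
    and s: "\<And>x y z. x < y \<Longrightarrow> y < z \<Longrightarrow> P x y z"
    and d: "a \<noteq> b" "a \<noteq> c" "b \<noteq> c"
  shows "P a b c"
proof (cases "a < b")
  case ab: True
  show ?thesis
  proof (cases "b < c")
    case True show ?thesis by (rule s[OF ab True])
  next
    case False
    hence cb: "c < b" using d by simp
    show ?thesis
    proof (cases "a < c")
      case True show ?thesis by (rule s2[OF s[OF True cb]])
    next
      case False
      hence ca: "c < a" using d by simp
      show ?thesis by (rule s2[OF s1[OF s[OF ca ab]]])
    qed
  qed
next
  case False
  hence ba: "b < a" using d by simp
  show ?thesis
  proof (cases "a < c")
    case True show ?thesis by (rule s1[OF s[OF ba True]])
  next
    case False
    hence ca: "c < a" using d by simp
    show ?thesis
    proof (cases "b < c")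
      case True show ?thesis by (rule s2[OF s1[OF s2[OF s1[OF s[OF True ca]]]]])
    next
      case False
      hence cb: "c < b" using d by simp
      show ?thesis by (rule s2[OF s1[OF s2[OF s[OF cb ba]]]])
    qed
  qed
qed

lemma crossnz_sym: "crossnz v a b \<Longrightarrow> crossnz v b a"
  unfolding crossnz_def by (auto simp: algebra_simps)

lemma det3_swap1: "det3 v b a c = - det3 v a b c"
  unfolding det3_def by algebra
lemma det3_swap2: "det3 v a c b = - det3 v a b c"
  unfolding det3_def by algebra

lemma crossnz_realv: "crossnz (realv V) a b \<longleftrightarrow> crossnzI V a b"
  unfolding crossnz_def crossnzI_def realv_def
  by (simp only: of_int_mult[symmetric] of_int_diff[symmetric] of_int_eq_0_iff)

lemma det3_realv: "det3 (realv V) a b c = of_int (det3I V a b c)"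
  unfolding det3_def det3I_def realv_def by simp

lemma chk_good:
  assumes C: "chk V T m"
  shows "good_sym m (tblf T) (realv V)" and "\<forall>x\<in>{1..m}. \<forall>y\<in>{1..m}. tblf T x y \<in> {1..m}"
proof -
  have C0': "\<forall>x\<in>set [1..<m+1]. \<forall>y\<in>set [1..<m+1]. 1 \<le> T ! (x - 1) ! (y - 1) \<and> T ! (x - 1) ! (y - 1) \<le> m"
    and C1': "\<forall>a\<in>set [1..<3*m+1]. \<forall>b\<in>set [a+1..<3*m+1]. crossnzI V a b"
    and C2': "\<forall>a\<in>set [1..<3*m+1]. \<forall>b\<in>set [a+1..<3*m+1]. \<forall>c\<in>set [b+1..<3*m+1].
       (det3I V a b c = 0 \<longleftrightarrow> predI T m a b c)"
    using C unfolding chk_def by blast+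
  have C0: "1 \<le> T ! (x - 1) ! (y - 1) \<and> T ! (x - 1) ! (y - 1) \<le> m" if "x \<in> {1..m}" "y \<in> {1..m}" for x y
  proof -
    have "x \<in> set [1..<m+1]" "y \<in> set [1..<m+1]" using that by auto
    thus ?thesis using C0' by blast
  qed
  show R: "\<forall>x\<in>{1..m}. \<forall>y\<in>{1..m}. tblf T x y \<in> {1..m}" using C0 by (simp add: tblf_def)
  have C1: "crossnzI V a b" if "1 \<le> a" "a < b" "b \<le> 3 * m" for a b
  proof -
    have "a \<in> set [1..<3*m+1]" "b \<in> set [a+1..<3*m+1]" using that by auto
    thus ?thesis using C1' by blast
  qed
  have C2: "det3I V a b c = 0 \<longleftrightarrow> predI T m a b c" if "1 \<le> a" "a < b" "b < c" "c \<le> 3 * m" for a b c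
  proof -
    have "a \<in> set [1..<3*m+1]" "b \<in> set [a+1..<3*m+1]" "c \<in> set [b+1..<3*m+1]" using that by auto
    thus ?thesis using C2' by blast
  qed
  have P1: "crossnz (realv V) a b" if "a \<in> {1..3*m}" "b \<in> {1..3*m}" "a \<noteq> b" for a b
  proof (cases "a < b")
    case True thus ?thesis using C1[of a b] that by (simp add: crossnz_realv)
  next
    case False
    hence "b < a" using that by simp
    hence "crossnz (realv V) b a" using C1[of b a] that by (simp add: crossnz_realv)
    thus ?thesis by (rule crossnz_sym)
  qed
  define P where "P a b c \<longleftrightarrow> (a \<in> {1..3*m} \<longrightarrow> b \<in> {1..3*m} \<longrightarrow> c \<in> {1..3*m} \<longrightarrow>
      (det3 (realv V) a b c = 0 \<longleftrightarrow> {a, b, c} \<in> CK m (tblf T)))" for a b c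
  have P2: "P a b c" if "a \<noteq> b" "a \<noteq> c" "b \<noteq> c" for a b c
  proof (rule sym3[of P, OF _ _ _ that])
    fix x y z assume "P x y z" thus "P y x z"
      unfolding P_def det3_swap1[of _ y x] by (simp add: insert_commute)
  next
    fix x y z assume "P x y z" thus "P x z y"
      unfolding P_def det3_swap2[of _ x z] by (simp add: insert_commute)
  next
    fix x y z :: nat assume xy: "x < y" "y < z"
    show "P x y z" unfolding P_def
    proof (intro impI)
      assume "x \<in> {1..3*m}" "y \<in> {1..3*m}" "z \<in> {1..3*m}"
      hence "det3I V x y z = 0 \<longleftrightarrow> predI T m x y z" using C2[of x y z] xy by simp
      also have "\<dots> \<longleftrightarrow> (x \<le> m \<and> m < y \<and> y \<le> 2 * m \<and> z = 2 * m + tblf T x (y - m))"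
        by (simp add: predI_def tblf_def)
      also have "\<dots> \<longleftrightarrow> {x, y, z} \<in> CK m (tblf T)"
        using ck_sorted[OF xy _ R] \<open>x \<in> {1..3*m}\<close> by simp
      finally show "det3 (realv V) x y z = 0 \<longleftrightarrow> {x, y, z} \<in> CK m (tblf T)"
        by (simp add: det3_realv)
    qed
  qed
  show "good_sym m (tblf T) (realv V)"
    unfolding good_sym_def using P1 P2 unfolding P_def by blast
qed

definition v1 :: "nat \<Rightarrow> nat \<Rightarrow> real" where
  "v1 a k = (if a = 1 then (if k = 0 then 1 else 0) else if a = 2 then (if k = 1 then 1 else 0)
             else (if k = 2 then 0 else 1))"

lemma m1_case: "\<exists>E indep. is_MK 1 K E indep \<and> real_realizable E indep"
proof -
  define ind where "ind S \<longleftrightarrow> S \<subseteq> {1::nat, 2, 3} \<and> card S \<le> 2" for S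
  have E: "{1..3 * 1} = {1::nat, 2, 3}" by auto
  have key: "ind S \<longleftrightarrow> S \<subseteq> {1..3*1} \<and> lin_indep_family 3 v1 S" for S
  proof (cases "S \<subseteq> {1, 2, 3}")
    case False thus ?thesis unfolding ind_def E by simp
  next
    case True
    have fin: "finite S" using True finite_subset by blast
    show ?thesis
    proof
      assume "ind S"
      hence "card S \<le> 2" unfolding ind_def by simp
      from card_le2_cases[OF fin this] have "lin_indep_family 3 v1 S"
      proof (elim disjE exE conjE)
        assume "S = {}" thus ?thesis by (simp add: lin_indep_family_def)
      next
        fix a assume "S = {a}"
        hence "a = 1 \<or> a = 2 \<or> a = 3" using True by auto
        thus ?thesis using \<open>S = {a}\<close> by (auto intro!: single_indep simp: v1_def)
      next
        fix a b assume ab: "a \<noteq> b" "S = {a, b}"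
        hence "a = 1 \<or> a = 2 \<or> a = 3" "b = 1 \<or> b = 2 \<or> b = 3" using True by auto
        hence "crossnz v1 a b" using ab(1) by (auto simp: crossnz_def v1_def)
        thus ?thesis using pair_indep[OF ab(1)] ab(2) by simp
      qed
      thus "S \<subseteq> {1..3*1} \<and> lin_indep_family 3 v1 S" using True E by simp
    next
      assume A: "S \<subseteq> {1..3*1} \<and> lin_indep_family 3 v1 S"
      show "ind S"
      proof (rule ccontr)
        assume "\<not> ind S"
        hence c1: "\<not> card S \<le> 2" using True unfolding ind_def by blast
        have "card S \<le> card {1::nat, 2, 3}" by (rule card_mono[OF _ True]) simp
        hence "card S \<le> 3" by simp
        hence "card S = card {1::nat, 2, 3}" using c1 by simp
        hence "S = {1, 2, 3}" by (rule card_subset_eq[OF _ True, rotated]) simp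
        moreover have "\<not> lin_indep_family 3 v1 {1, 2, 3}"
          by (rule triple_dep) (auto simp: det3_def crossnz_def v1_def)
        ultimately show False using A by simp
      qed
    qed
  qed
  have r: "real_realizable {1..3*1} ind"
    unfolding real_realizable_def by (intro exI[of _ 3] exI[of _ v1] allI key)
  have i: "is_MK 1 K {1..3*1} ind"
    unfolding is_MK_def by (simp add: ind_def)
  show ?thesis using r i by blast
qed

definition T2_0 :: "nat list list" where "T2_0 = [[1, 2], [2, 1]]"
definition V2_0 :: "int list list" where "V2_0 = [[(-3), 2, 1], [2, (-3), 8], [(-2), 3, 1], [0, (-1), 1], [4, 9, 1], [2, (-3), 1]]"
definition T3_0 :: "nat list list" where "T3_0 = [[1, 2, 3], [2, 3, 1], [3, 1, 2]]"
definition V3_0 :: "int list list" where "V3_0 = [[(-4), 3, 1], [(-1), (-3), 1], [0, 1, 1], [14, (-57), 1], [6, 17, 1], [10, (-3), 8], [(-51), (-109), 27], [(-380), 543, 125], [56, 111, 343]]"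
definition T4_0 :: "nat list list" where "T4_0 = [[1, 2, 3, 4], [2, 1, 4, 3], [3, 4, 1, 2], [4, 3, 2, 1]]"
definition V4_0 :: "int list list" where "V4_0 = [[(-3), 4, 1], [7, (-24), 1], [3, 8, 1], [(-2), (-3), 1], [10, (-15), 8], [(-145), 144, 125], [(-123), (-80), 27], [49, 360, 1], [(-6579), 8372, 4913], [18929, (-37128), 12167], [7749, 40664, 343], [(-9074), (-8211), 2197]]"
definition T4_1 :: "nat list list" where "T4_1 = [[1, 2, 3, 4], [2, 1, 4, 3], [3, 4, 2, 1], [4, 3, 1, 2]]"
definition V4_1 :: "int list list" where "V4_1 = [[(-12), 30, 1], [(-6), (-15), 8], [(-9), (-27), 1], [(-1), 3, 1], [324, (-1647), 64], [48, 244, 27], [363, 7095, 1], [33, (-645), 1331], [(-1049412), (-3503310), 753571], [(-1540266), 5141955, 238328], [(-235225), (-430389), 15625], [(-545625), 998325, 912673]]"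
definition T4_2 :: "nat list list" where "T4_2 = [[1, 2, 3, 4], [2, 3, 4, 1], [3, 4, 1, 2], [4, 1, 2, 3]]"
definition V4_2 :: "int list list" where "V4_2 = [[(-12), 30, 1], [(-9), (-27), 1], [(-6), (-15), 8], [(-1), 3, 1], [324, (-1647), 64], [363, 7095, 1], [48, 244, 27], [33, (-645), 1331], [(-1049412), (-3503310), 753571], [(-235225), (-430389), 15625], [(-1540266), 5141955, 238328], [(-545625), 998325, 912673]]"
definition T4_3 :: "nat list list" where "T4_3 = [[1, 2, 3, 4], [2, 4, 1, 3], [3, 1, 4, 2], [4, 3, 2, 1]]"
definition V4_3 :: "int list list" where "V4_3 = [[(-12), 30, 1], [(-9), (-27), 1], [(-1), 3, 1], [(-6), (-15), 8], [324, (-1647), 64], [363, 7095, 1], [33, (-645), 1331], [48, 244, 27], [(-1049412), (-3503310), 753571], [(-235225), (-430389), 15625], [(-545625), 998325, 912673], [(-1540266), 5141955, 238328]]"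

lemma chk2_0: "chk V2_0 T2_0 2" by code_simp
lemma chk3_0: "chk V3_0 T3_0 3" by code_simp
lemma chk4_0: "chk V4_0 T4_0 4" by code_simp
lemma chk4_1: "chk V4_1 T4_1 4" by code_simp
lemma chk4_2: "chk V4_2 T4_2 4" by code_simp
lemma chk4_3: "chk V4_3 T4_3 4" by code_simp

lemma latin_range:
  assumes "latin_square m K" "i \<in> {1..m}" "j \<in> {1..m}"
  shows "K i j \<in> {1..m}"
proof -
  have "bij_betw (\<lambda>j. K i j) {1..m} {1..m}" using assms unfolding latin_square_def by blast
  thus ?thesis using assms(3) bij_betwE by blast
qed

lemma latin_row_inj:
  assumes "latin_square m K" "i \<in> {1..m}"
  shows "inj_on (\<lambda>j. K i j) {1..m}"
  using assms unfolding latin_square_def bij_betw_def by blast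

lemma latin_col_inj:
  assumes "latin_square m K" "j \<in> {1..m}"
  shows "inj_on (\<lambda>i. K i j) {1..m}"
  using assms unfolding latin_square_def bij_betw_def by blast

lemma reduce:
  assumes LS: "latin_square m K" and m1: "1 \<le> m"
  shows "\<exists>\<alpha> \<beta> L. bij_betw \<alpha> {1..m} {1..m} \<and> bij_betw \<beta> {1..m} {1..m} \<and>
     (\<forall>i\<in>{1..m}. \<forall>j\<in>{1..m}. K i j = L (\<alpha> i) (\<beta> j)) \<and> latin_square m L \<and>
     (\<forall>y\<in>{1..m}. L 1 y = y) \<and> (\<forall>x\<in>{1..m}. L x 1 = x)"
proof -
  have one: "1 \<in> {1..m}" using m1 by simp
  have rows: "\<And>i. i \<in> {1..m} \<Longrightarrow> bij_betw (\<lambda>j. K i j) {1..m} {1..m}"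
    and cols: "\<And>j. j \<in> {1..m} \<Longrightarrow> bij_betw (\<lambda>i. K i j) {1..m} {1..m}"
    using LS unfolding latin_square_def by blast+
  have "1 \<in> (\<lambda>j. K 1 j) ` {1..m}" using rows[OF one] one unfolding bij_betw_def by simp
  then obtain c1 where c1: "c1 \<in> {1..m}" "K 1 c1 = 1" by (metis imageE)
  define \<alpha> where "\<alpha> i = K i c1" for i
  define \<beta> where "\<beta> j = K 1 j" for j
  have A: "bij_betw \<alpha> {1..m} {1..m}" unfolding \<alpha>_def[abs_def] by (rule cols[OF c1(1)])
  have B: "bij_betw \<beta> {1..m} {1..m}" unfolding \<beta>_def[abs_def] by (rule rows[OF one])
  define ai where "ai = the_inv_into {1..m} \<alpha>"
  define bi where "bi = the_inv_into {1..m} \<beta>"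
  have Ai: "bij_betw ai {1..m} {1..m}" unfolding ai_def by (rule bij_betw_the_inv_into[OF A])
  have Bi: "bij_betw bi {1..m} {1..m}" unfolding bi_def by (rule bij_betw_the_inv_into[OF B])
  have aia: "\<And>i. i \<in> {1..m} \<Longrightarrow> ai (\<alpha> i) = i" unfolding ai_def
    using A bij_betw_def the_inv_into_f_f by metis
  have bib: "\<And>i. i \<in> {1..m} \<Longrightarrow> bi (\<beta> i) = i" unfolding bi_def
    using B bij_betw_def the_inv_into_f_f by metis
  have aai: "\<And>x. x \<in> {1..m} \<Longrightarrow> \<alpha> (ai x) = x" unfolding ai_def
    using A f_the_inv_into_f_bij_betw by metis
  have bbi: "\<And>x. x \<in> {1..m} \<Longrightarrow> \<beta> (bi x) = x" unfolding bi_def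
    using B f_the_inv_into_f_bij_betw by metis
  have air: "\<And>x. x \<in> {1..m} \<Longrightarrow> ai x \<in> {1..m}" using Ai bij_betwE by blast
  have bir: "\<And>x. x \<in> {1..m} \<Longrightarrow> bi x \<in> {1..m}" using Bi bij_betwE by blast
  define L where "L x y = K (ai x) (bi y)" for x y
  have KL: "\<forall>i\<in>{1..m}. \<forall>j\<in>{1..m}. K i j = L (\<alpha> i) (\<beta> j)"
    unfolding L_def using aia bib by simp
  have LS2: "latin_square m L"
    unfolding latin_square_def
  proof (intro conjI ballI)
    fix x assume x: "x \<in> {1..m}"
    have "bij_betw ((\<lambda>j. K (ai x) j) \<circ> bi) {1..m} {1..m}"
      by (rule bij_betw_trans[OF Bi rows[OF air[OF x]]])
    thus "bij_betw (\<lambda>y. L x y) {1..m} {1..m}" by (simp add: L_def o_def)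
  next
    fix y assume y: "y \<in> {1..m}"
    have "bij_betw ((\<lambda>i. K i (bi y)) \<circ> ai) {1..m} {1..m}"
      by (rule bij_betw_trans[OF Ai cols[OF bir[OF y]]])
    thus "bij_betw (\<lambda>x. L x y) {1..m} {1..m}" by (simp add: L_def o_def)
  qed
  have "\<alpha> 1 = 1" using c1 by (simp add: \<alpha>_def)
  hence ai1: "ai 1 = 1" using aia[OF one] by simp
  have "\<beta> c1 = 1" using c1 by (simp add: \<beta>_def)
  hence bi1: "bi 1 = c1" using bib[OF c1(1)] by simp
  have R1: "\<forall>y\<in>{1..m}. L 1 y = y"
  proof
    fix y assume y: "y \<in> {1..m}"
    have "L 1 y = K (ai 1) (bi y)" by (simp only: L_def)
    also have "\<dots> = \<beta> (bi y)" unfolding ai1 \<beta>_def ..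
    finally have "L 1 y = \<beta> (bi y)" .
    thus "L 1 y = y" using bbi[OF y] by simp
  qed
  have C1: "\<forall>x\<in>{1..m}. L x 1 = x"
  proof
    fix x assume x: "x \<in> {1..m}"
    have "L x 1 = K (ai x) (bi 1)" by (simp only: L_def)
    also have "\<dots> = \<alpha> (ai x)" unfolding bi1 \<alpha>_def ..
    finally have "L x 1 = \<alpha> (ai x)" .
    thus "L x 1 = x" using aai[OF x] by simp
  qed
  show ?thesis using A B KL LS2 R1 C1 by blast
qed

lemma ball4: "(\<forall>x\<in>{1..4::nat}. P x) \<longleftrightarrow> P 1 \<and> P 2 \<and> P 3 \<and> P 4"
proof -
  have "{1..4::nat} = {1, 2, 3, 4}" by auto
  thus ?thesis by simp
qed

lemma ball3: "(\<forall>x\<in>{1..3::nat}. P x) \<longleftrightarrow> P 1 \<and> P 2 \<and> P 3"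
proof -
  have "{1..3::nat} = {1, 2, 3}" by auto
  thus ?thesis by simp
qed

lemma ball2: "(\<forall>x\<in>{1..2::nat}. P x) \<longleftrightarrow> P 1 \<and> P 2"
proof -
  have "{1..2::nat} = {1, 2}" by auto
  thus ?thesis by simp
qed

lemma red4_aux:
  fixes a22 a23 a24 a32 a33 a34 a42 a43 a44 :: nat
  assumes "a22 \<in> {1..4}" "a23 \<in> {1..4}" "a24 \<in> {1..4}" "a32 \<in> {1..4}" "a33 \<in> {1..4}" "a34 \<in> {1..4}"
    "a42 \<in> {1..4}" "a43 \<in> {1..4}" "a44 \<in> {1..4}"
    "distinct [2,a22,a23,a24]" "distinct [3,a32,a33,a34]" "distinct [4,a42,a43,a44]"
    "distinct [2,a22,a32,a42]" "distinct [3,a23,a33,a43]" "distinct [4,a24,a34,a44]"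
  shows "[a22,a23,a24,a32,a33,a34,a42,a43,a44] \<in> {[1,4,3,4,1,2,3,2,1], [1,4,3,4,2,1,3,1,2], [3,4,1,4,1,2,1,2,3], [4,1,3,1,4,2,3,2,1]}"
proof -
  have d: "\<And>x::nat. x \<in> {1..4} \<longleftrightarrow> x = 1 \<or> x = 2 \<or> x = 3 \<or> x = 4" by auto
  show ?thesis using assms unfolding d by auto
qed

lemma red3_aux:
  fixes a22 a23 a32 a33 :: nat
  assumes "a22 \<in> {1..3}" "a23 \<in> {1..3}" "a32 \<in> {1..3}" "a33 \<in> {1..3}"
    "distinct [2,a22,a23]" "distinct [3,a32,a33]" "distinct [2,a22,a32]" "distinct [3,a23,a33]"
  shows "a22 = 3 \<and> a23 = 1 \<and> a32 = 1 \<and> a33 = 2"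
proof -
  have d: "\<And>x::nat. x \<in> {1..3} \<longleftrightarrow> x = 1 \<or> x = 2 \<or> x = 3" by auto
  show ?thesis using assms unfolding d by auto
qed

lemma inj_distinct4: "inj_on f {1..4::nat} \<Longrightarrow> distinct [f 1, f 2, f 3, f 4]"
  by (simp add: inj_on_eq_iff)
lemma inj_distinct3: "inj_on f {1..3::nat} \<Longrightarrow> distinct [f 1, f 2, f 3]"
  by (simp add: inj_on_eq_iff)
lemma inj_distinct2: "inj_on f {1..2::nat} \<Longrightarrow> distinct [f 1, f 2]"
  by (simp add: inj_on_eq_iff)

lemma class4:
  assumes LS: "latin_square 4 L" and R1: "\<forall>y\<in>{1..4}. L 1 y = y" and C1: "\<forall>x\<in>{1..4}. L x 1 = x"
  shows "\<exists>T\<in>{T4_0, T4_1, T4_2, T4_3}. \<forall>x\<in>{1..4}. \<forall>y\<in>{1..4}. L x y = tblf T x y"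
proof -
  have rng: "\<And>x y. x \<in> {1..4} \<Longrightarrow> y \<in> {1..4} \<Longrightarrow> L x y \<in> {1..4}"
    using latin_range[OF LS] by blast
  have dr: "\<And>x. x \<in> {1..4} \<Longrightarrow> distinct [L x 1, L x 2, L x 3, L x 4]"
    using inj_distinct4[OF latin_row_inj[OF LS]] by blast
  have dc: "\<And>y. y \<in> {1..4} \<Longrightarrow> distinct [L 1 y, L 2 y, L 3 y, L 4 y]"
    using inj_distinct4[OF latin_col_inj[OF LS]] by blast
  have r1: "L 1 1 = 1" "L 1 2 = 2" "L 1 3 = 3" "L 1 4 = 4" using R1 by (simp_all add: ball4)
  have c1: "L 2 1 = 2" "L 3 1 = 3" "L 4 1 = 4" using C1 by (simp_all add: ball4)
  have "[L 2 2, L 2 3, L 2 4, L 3 2, L 3 3, L 3 4, L 4 2, L 4 3, L 4 4] \<in>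
     {[1,4,3,4,1,2,3,2,1], [1,4,3,4,2,1,3,1,2], [3,4,1,4,1,2,1,2,3], [4,1,3,1,4,2,3,2,1]}"
    apply (rule red4_aux)
    using rng apply simp_all[9]
    using dr[of 2] dr[of 3] dr[of 4] dc[of 2] dc[of 3] dc[of 4] r1 c1 by simp_all
  hence cases: "[L 2 2, L 2 3, L 2 4, L 3 2, L 3 3, L 3 4, L 4 2, L 4 3, L 4 4] = [1,4,3,4,1,2,3,2,1] \<or>
     [L 2 2, L 2 3, L 2 4, L 3 2, L 3 3, L 3 4, L 4 2, L 4 3, L 4 4] = [1,4,3,4,2,1,3,1,2] \<or>
     [L 2 2, L 2 3, L 2 4, L 3 2, L 3 3, L 3 4, L 4 2, L 4 3, L 4 4] = [3,4,1,4,1,2,1,2,3] \<or>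
     [L 2 2, L 2 3, L 2 4, L 3 2, L 3 3, L 3 4, L 4 2, L 4 3, L 4 4] = [4,1,3,1,4,2,3,2,1]" by simp
  show ?thesis
  proof (rule disjE[OF cases]; (elim disjE)?)
    assume h: "[L 2 2, L 2 3, L 2 4, L 3 2, L 3 3, L 3 4, L 4 2, L 4 3, L 4 4] = [1,4,3,4,1,2,3,2,1]"
    show ?thesis by (rule bexI[of _ T4_0]) (use h r1 c1 in \<open>simp_all only: ball4, simp_all add: tblf_def T4_0_def\<close>)
  next
    assume h: "[L 2 2, L 2 3, L 2 4, L 3 2, L 3 3, L 3 4, L 4 2, L 4 3, L 4 4] = [1,4,3,4,2,1,3,1,2]"
    show ?thesis by (rule bexI[of _ T4_1]) (use h r1 c1 in \<open>simp_all only: ball4, simp_all add: tblf_def T4_1_def\<close>)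
  next
    assume h: "[L 2 2, L 2 3, L 2 4, L 3 2, L 3 3, L 3 4, L 4 2, L 4 3, L 4 4] = [3,4,1,4,1,2,1,2,3]"
    show ?thesis by (rule bexI[of _ T4_2]) (use h r1 c1 in \<open>simp_all only: ball4, simp_all add: tblf_def T4_2_def\<close>)
  next
    assume h: "[L 2 2, L 2 3, L 2 4, L 3 2, L 3 3, L 3 4, L 4 2, L 4 3, L 4 4] = [4,1,3,1,4,2,3,2,1]"
    show ?thesis by (rule bexI[of _ T4_3]) (use h r1 c1 in \<open>simp_all only: ball4, simp_all add: tblf_def T4_3_def\<close>)
  qed
qed

lemma class3:
  assumes LS: "latin_square 3 L" and R1: "\<forall>y\<in>{1..3}. L 1 y = y" and C1: "\<forall>x\<in>{1..3}. L x 1 = x"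
  shows "\<forall>x\<in>{1..3}. \<forall>y\<in>{1..3}. L x y = tblf T3_0 x y"
proof -
  have rng: "\<And>x y. x \<in> {1..3} \<Longrightarrow> y \<in> {1..3} \<Longrightarrow> L x y \<in> {1..3}"
    using latin_range[OF LS] by blast
  have dr: "\<And>x. x \<in> {1..3} \<Longrightarrow> distinct [L x 1, L x 2, L x 3]"
    using inj_distinct3[OF latin_row_inj[OF LS]] by blast
  have dc: "\<And>y. y \<in> {1..3} \<Longrightarrow> distinct [L 1 y, L 2 y, L 3 y]"
    using inj_distinct3[OF latin_col_inj[OF LS]] by blast
  have r1: "L 1 1 = 1" "L 1 2 = 2" "L 1 3 = 3" using R1 by (simp_all add: ball3)
  have c1: "L 2 1 = 2" "L 3 1 = 3" using C1 by (simp_all add: ball3)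
  have "L 2 2 = 3 \<and> L 2 3 = 1 \<and> L 3 2 = 1 \<and> L 3 3 = 2"
    apply (rule red3_aux)
    using rng apply simp_all[4]
    using dr[of 2] dr[of 3] dc[of 2] dc[of 3] r1 c1 by simp_all
  thus ?thesis using r1 c1 unfolding ball3 by (simp add: tblf_def T3_0_def)
qed

lemma class2:
  assumes LS: "latin_square 2 L" and R1: "\<forall>y\<in>{1..2}. L 1 y = y" and C1: "\<forall>x\<in>{1..2}. L x 1 = x"
  shows "\<forall>x\<in>{1..2}. \<forall>y\<in>{1..2}. L x y = tblf T2_0 x y"
proof -
  have rng: "L 2 2 \<in> {1..2}" using latin_range[OF LS] by simp
  have dr: "distinct [L 2 1, L 2 2]"
    using inj_distinct2[OF latin_row_inj[OF LS]] by simp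
  have r1: "L 1 1 = 1" "L 1 2 = 2" using R1 by (simp_all add: ball2)
  have c1: "L 2 1 = 2" using C1 by (simp_all add: ball2)
  have "L 2 2 = 1" using rng dr c1 by auto
  thus ?thesis using r1 c1 unfolding ball2 by (simp add: tblf_def T2_0_def)
qed

lemma from_table:
  assumes LS: "latin_square m K" and m2: "2 \<le> m" and C: "chk V T m"
    and A: "bij_betw \<alpha> {1..m} {1..m}" and B: "bij_betw \<beta> {1..m} {1..m}"
    and KL: "\<forall>i\<in>{1..m}. \<forall>j\<in>{1..m}. K i j = tblf T (\<alpha> i) (\<beta> j)"
  shows "\<exists>E indep. is_MK m K E indep \<and> real_realizable E indep"
proof -
  have G: "good_sym m K (\<lambda>a. realv V (piso m \<alpha> \<beta> a))"
    by (rule transfer[OF chk_good(1)[OF C] A B KL chk_good(2)[OF C]])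
  have R: "\<forall>i\<in>{1..m}. \<forall>j\<in>{1..m}. K i j \<in> {1..m}" using latin_range[OF LS] by blast
  have M: "is_MK m K {1..3*m} (\<lambda>S. S \<subseteq> {1..3*m} \<and> lin_indep_family 3 (\<lambda>a. realv V (piso m \<alpha> \<beta> a)) S)"
    by (rule main_good[OF m2 G R])
  have "real_realizable {1..3*m} (\<lambda>S. S \<subseteq> {1..3*m} \<and> lin_indep_family 3 (\<lambda>a. realv V (piso m \<alpha> \<beta> a)) S)"
    unfolding real_realizable_def by blast
  thus ?thesis using M by blast
qed

theorem mainTheorem8:
  fixes m :: nat and K :: "nat \<Rightarrow> nat \<Rightarrow> nat"
  assumes "1 \<le> m" and "m \<le> 4" and "latin_square m K"
  shows "\<exists>E indep. is_MK m K E indep \<and> real_realizable E indep"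
proof (cases "m = 1")
  case True thus ?thesis using m1_case by simp
next
  case False
  hence m2: "2 \<le> m" using assms(1) by simp
  obtain \<alpha> \<beta> L where A: "bij_betw \<alpha> {1..m} {1..m}" and B: "bij_betw \<beta> {1..m} {1..m}"
    and KL: "\<forall>i\<in>{1..m}. \<forall>j\<in>{1..m}. K i j = L (\<alpha> i) (\<beta> j)" and LS: "latin_square m L"
    and R1: "\<forall>y\<in>{1..m}. L 1 y = y" and C1: "\<forall>x\<in>{1..m}. L x 1 = x"
    using reduce[OF assms(3,1)] by blast
  have ar: "\<And>i. i \<in> {1..m} \<Longrightarrow> \<alpha> i \<in> {1..m}" using A bij_betwE by blast
  have br: "\<And>i. i \<in> {1..m} \<Longrightarrow> \<beta> i \<in> {1..m}" using B bij_betwE by blast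
  have fin: "\<exists>V T. chk V T m \<and> (\<forall>x\<in>{1..m}. \<forall>y\<in>{1..m}. L x y = tblf T x y)"
  proof -
    have "m = 2 \<or> m = 3 \<or> m = 4" using m2 assms(2) by auto
    moreover
    { assume m: "m = 2"
      have ?thesis using chk2_0 class2[of L] LS R1 C1 unfolding m by blast }
    moreover
    { assume m: "m = 3"
      have ?thesis using chk3_0 class3[of L] LS R1 C1 unfolding m by blast }
    moreover
    { assume m: "m = 4"
      obtain T where T: "T \<in> {T4_0, T4_1, T4_2, T4_3}" "\<forall>x\<in>{1..4}. \<forall>y\<in>{1..4}. L x y = tblf T x y"
        using class4[of L] LS R1 C1 unfolding m by blast
      have "\<exists>V. chk V T 4" using T(1) chk4_0 chk4_1 chk4_2 chk4_3 by blast
      hence ?thesis using T(2) unfolding m by blast }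
    ultimately show ?thesis by blast
  qed
  then obtain V T where C: "chk V T m" and LT: "\<forall>x\<in>{1..m}. \<forall>y\<in>{1..m}. L x y = tblf T x y" by blast
  have KT: "\<forall>i\<in>{1..m}. \<forall>j\<in>{1..m}. K i j = tblf T (\<alpha> i) (\<beta> j)"
    using KL LT ar br by simp
  show ?thesis by (rule from_table[OF assms(3) m2 C A B KT])
qed

end
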